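(* Assume $E\setminus T\ne\emptyset$ and $\epsilon\ge0$. Let $f\in\mathbb{R}^E$ be feasible with $\xi_r(f)\le(1+\epsilon)\xi_r(f^* )$. Let $g_0=f$ and for $j\ge1$ let $g_j=g_{j-1}-\frac{\Delta_{e_j}(g_{j-1})}{R_{e_j}}c_{e_j}$, where $e_1,e_2,\dots$ are drawn independently from $p$; let $w_j$ be the tree induced voltages of $g_j$. Let $K'$ be uniform on $\{0,1,\dots,\lceil\tau\rceil-1\}$, independent of the $e_j$. Then \[ \mathbb{E}\big[\mathrm{gap}(g_{K'},w_{K'})\big]\le\epsilon\,\xi_r(f^* ). \]
   Context: Let $G=(V,E,w)$ be a connected undirected graph with resistances $r_e=1/w_e>0$. Each edge has a fixed orientation $(a,b)$; for $f\in\mathbb{R}^E$ write $f(b,a):=-f(a,b)$. The incidence matrix $B\in\mathbb{R}^{E\times V}$ has $B_{(a,b),c}=1$ if $c=a$, $-1$ if $c=b$, $0$ otherwise; $R=\mathrm{diag}(r_e)_{e\in E}$; $L=B^TR^{-1}B$. The energy of $f$ is $\xi_r(f)=f^TRf$. Fix $\chi\in\mathbb{R}^V$ with $\sum_a\chi(a)=0$; $f$ is feasible if $B^Tf=\chi$; $f^*$ is the unique feasible $f$ minimizing $\xi_r(f)$. The dual energy of $v\in\mathbb{R}^V$ is $\zeta_r(v)=2v^T\chi-v^TLv$ and $\mathrm{gap}(f,v)=\xi_r(f)-\zeta_r(v)$. Let $T\subseteq E$ be a spanning tree. For vertices $a,b$, $\pi_{(a,b)}\in\mathbb{R}^E$ is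 the unit flow from $a$ to $b$ along the unique $a$–$b$ path in $T$. For $e=(a,b)\in E\setminus T$, $c_e=\mathbf{1}_e-\pi_{(a,b)}$, $R_e=c_e^TRc_e$, $\Delta_e(f)=f^TRc_e$. The tree condition number is $\tau=\sum_{e\in E\setminus T}R_e/r_e$ and $p$ is the distribution on $E\setminus T$ with $p_e=\frac{R_e}{r_e\tau}$. Fix a root $s\in V$; the tree induced voltages of $f$ are $v(a)=\sum r_{e'}f(e')$, summing over the edges $e'$ of the tree path from $a$ to $s$, each traversed in the direction of the path (with the antisymmetry convention). *)

theory Defs
  imports "HOL-Probability.Probability"
begin

text \<open>Graph: finite vertex set V, edges are oriented pairs (a,b) in E (the fixed
orientation of each undirected edge). Flows and resistances are functions on pairs;
only their values on E matter.\<close>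

definition incid :: "'v \<times> 'v \<Rightarrow> 'v \<Rightarrow> real" where
  "incid e c = (if c = fst e then 1 else if c = snd e then -1 else 0)"

definition feasible :: "'v set \<Rightarrow> ('v \<times> 'v) set \<Rightarrow> ('v \<Rightarrow> real) \<Rightarrow> ('v \<times> 'v \<Rightarrow> real) \<Rightarrow> bool" where
  "feasible V E chi f \<longleftrightarrow> (\<forall>c\<in>V. (\<Sum>e\<in>E. incid e c * f e) = chi c)"

definition energy :: "('v \<times> 'v) set \<Rightarrow> ('v \<times> 'v \<Rightarrow> real) \<Rightarrow> ('v \<times> 'v \<Rightarrow> real) \<Rightarrow> real" where
  "energy E r f = (\<Sum>e\<in>E. f e * r e * f e)"

definition lap :: "('v \<times> 'v) set \<Rightarrow> ('v \<times> 'v \<Rightarrow> real) \<Rightarrow> 'v \<Rightarrow> 'v \<Rightarrow> real" where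
  "lap E r a b = (\<Sum>e\<in>E. incid e a * (1 / r e) * incid e b)"

definition dual_energy :: "'v set \<Rightarrow> ('v \<times> 'v) set \<Rightarrow> ('v \<times> 'v \<Rightarrow> real) \<Rightarrow> ('v \<Rightarrow> real) \<Rightarrow> ('v \<Rightarrow> real) \<Rightarrow> real" where
  "dual_energy V E r chi v = 2 * (\<Sum>a\<in>V. v a * chi a) - (\<Sum>a\<in>V. \<Sum>b\<in>V. v a * lap E r a b * v b)"

definition gap :: "'v set \<Rightarrow> ('v \<times> 'v) set \<Rightarrow> ('v \<times> 'v \<Rightarrow> real) \<Rightarrow> ('v \<Rightarrow> real) \<Rightarrow> ('v \<times> 'v \<Rightarrow> real) \<Rightarrow> ('v \<Rightarrow> real) \<Rightarrow> real" where
  "gap V E r chi f v = energy E r f - dual_energy V E r chi v"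

definition usym :: "('v \<times> 'v) set \<Rightarrow> ('v \<times> 'v) set" where
  "usym S = {(a, b). (a, b) \<in> S \<or> (b, a) \<in> S}"

definition connected_on :: "'v set \<Rightarrow> ('v \<times> 'v) set \<Rightarrow> bool" where
  "connected_on V S \<longleftrightarrow> (\<forall>a\<in>V. \<forall>b\<in>V. (a, b) \<in> (usym S)\<^sup>*)"

text \<open>Spanning tree: a minimally connected spanning subgraph (connected, and every
edge is a bridge, i.e. acyclic).\<close>

definition spanning_tree :: "'v set \<Rightarrow> ('v \<times> 'v) set \<Rightarrow> ('v \<times> 'v) set \<Rightarrow> bool" where
  "spanning_tree V E T \<longleftrightarrow> T \<subseteq> E \<and> connected_on V T \<and>
     (\<forall>(a, b)\<in>T. (a, b) \<notin> (usym (T - {(a, b)}))\<^sup>*)"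

definition is_tpath :: "('v \<times> 'v) set \<Rightarrow> 'v list \<Rightarrow> 'v \<Rightarrow> 'v \<Rightarrow> bool" where
  "is_tpath T vs a b \<longleftrightarrow> vs \<noteq> [] \<and> hd vs = a \<and> last vs = b \<and> distinct vs \<and>
     (\<forall>i. Suc i < length vs \<longrightarrow> (vs ! i, vs ! Suc i) \<in> T \<or> (vs ! Suc i, vs ! i) \<in> T)"

definition tpath :: "('v \<times> 'v) set \<Rightarrow> 'v \<Rightarrow> 'v \<Rightarrow> 'v list" where
  "tpath T a b = (THE vs. is_tpath T vs a b)"

definition tflow :: "('v \<times> 'v) set \<Rightarrow> 'v \<Rightarrow> 'v \<Rightarrow> 'v \<times> 'v \<Rightarrow> real" where
  "tflow T a b e = (let vs = tpath T a b in
     (\<Sum>i<length vs - 1. (if e = (vs ! i, vs ! Suc i) then 1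
                          else if e = (vs ! Suc i, vs ! i) then -1 else 0)))"

definition cvec :: "('v \<times> 'v) set \<Rightarrow> 'v \<times> 'v \<Rightarrow> 'v \<times> 'v \<Rightarrow> real" where
  "cvec T e x = (if x = e then 1 else 0) - tflow T (fst e) (snd e) x"

definition Rres :: "('v \<times> 'v) set \<Rightarrow> ('v \<times> 'v \<Rightarrow> real) \<Rightarrow> ('v \<times> 'v) set \<Rightarrow> 'v \<times> 'v \<Rightarrow> real" where
  "Rres E r T e = (\<Sum>x\<in>E. cvec T e x * r x * cvec T e x)"

definition Delta :: "('v \<times> 'v) set \<Rightarrow> ('v \<times> 'v \<Rightarrow> real) \<Rightarrow> ('v \<times> 'v) set \<Rightarrow> 'v \<times> 'v \<Rightarrow> ('v \<times> 'v \<Rightarrow> real) \<Rightarrow> real" where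
  "Delta E r T e f = (\<Sum>x\<in>E. f x * r x * cvec T e x)"

definition tcond :: "('v \<times> 'v) set \<Rightarrow> ('v \<times> 'v \<Rightarrow> real) \<Rightarrow> ('v \<times> 'v) set \<Rightarrow> real" where
  "tcond E r T = (\<Sum>e\<in>E - T. Rres E r T e / r e)"

definition pdist :: "('v \<times> 'v) set \<Rightarrow> ('v \<times> 'v \<Rightarrow> real) \<Rightarrow> ('v \<times> 'v) set \<Rightarrow> ('v \<times> 'v) pmf" where
  "pdist E r T = embed_pmf (\<lambda>e. if e \<in> E - T then Rres E r T e / (r e * tcond E r T) else 0)"

definition cstep :: "('v \<times> 'v) set \<Rightarrow> ('v \<times> 'v \<Rightarrow> real) \<Rightarrow> ('v \<times> 'v) set \<Rightarrow> ('v \<times> 'v \<Rightarrow> real) \<Rightarrow> 'v \<times> 'v \<Rightarrow> ('v \<times> 'v \<Rightarrow> real)" where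
  "cstep E r T g e = (\<lambda>x. g x - Delta E r T e g / Rres E r T e * cvec T e x)"

definition tvolt :: "('v \<times> 'v) set \<Rightarrow> ('v \<times> 'v \<Rightarrow> real) \<Rightarrow> ('v \<times> 'v) set \<Rightarrow> 'v \<Rightarrow> ('v \<times> 'v \<Rightarrow> real) \<Rightarrow> 'v \<Rightarrow> real" where
  "tvolt E r T s f a = (let vs = tpath T a s in
     (\<Sum>i<length vs - 1. (let x = vs ! i; y = vs ! Suc i in
        if (x, y) \<in> E then r (x, y) * f (x, y) else r (y, x) * (- f (y, x)))))"

text \<open>List of k independent draws from p (in order e_1, ..., e_k).\<close>

fun iid_list :: "'a pmf \<Rightarrow> nat \<Rightarrow> 'a list pmf" where
  "iid_list p 0 = return_pmf []"
| "iid_list p (Suc k) = bind_pmf (iid_list p k) (\<lambda>es. map_pmf (\<lambda>e. es @ [e]) p)"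

end

theory Submission imports Defs begin


lemma set_iid_list: "es \<in> set_pmf (iid_list p k) \<Longrightarrow> set es \<subseteq> set_pmf p"
  by (induction k arbitrary: es) fastforce+

lemma finite_iid_list: "finite (set_pmf p) \<Longrightarrow> finite (set_pmf (iid_list p k))"
  by (induction k) auto

lemma iid_step:
  fixes \<phi> :: "'g \<Rightarrow> real"
  assumes fin: "finite (set_pmf p)"
  shows "measure_pmf.expectation (iid_list p (Suc k)) (\<lambda>es. \<phi> (fold S es f)) =
         measure_pmf.expectation (iid_list p k) (\<lambda>es. measure_pmf.expectation p (\<lambda>e. \<phi> (S e (fold S es f))))"
proof -
  let ?A = "set_pmf (iid_list p k)"
  have fA: "finite ?A" using finite_iid_list[OF fin] .
  have "measure_pmf.expectation (iid_list p (Suc k)) (\<lambda>es. \<phi> (fold S es f)) =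
     (\<Sum>a\<in>?A. pmf (iid_list p k) a *\<^sub>R measure_pmf.expectation (map_pmf (\<lambda>e. a @ [e]) p) (\<lambda>es. \<phi> (fold S es f)))"
    by (simp only: iid_list.simps, rule pmf_expectation_bind[OF fA]) (auto simp: fin)
  also have "\<dots> = (\<Sum>a\<in>?A. measure_pmf.expectation p (\<lambda>e. \<phi> (S e (fold S a f))) * pmf (iid_list p k) a)"
    by (simp add: mult.commute)
  also have "\<dots> = measure_pmf.expectation (iid_list p k) (\<lambda>es. measure_pmf.expectation p (\<lambda>e. \<phi> (S e (fold S es f))))"
    by (rule integral_measure_pmf_real[symmetric]) (auto simp: fA)
  finally show ?thesis .
qed

lemma iid_feas:
  assumes "\<And>g e. Feas g \<Longrightarrow> e \<in> set_pmf p \<Longrightarrow> Feas (S e g)" "Feas f"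
  shows "set es \<subseteq> set_pmf p \<Longrightarrow> Feas (fold S es f)"
  using assms by (induction es rule: rev_induct) auto

lemma abstract_main:
  fixes p :: "'e pmf" and S :: "'e \<Rightarrow> 'g \<Rightarrow> 'g" and xi gp :: "'g \<Rightarrow> real"
  assumes fin: "finite (set_pmf p)"
    and feasS: "\<And>g e. Feas g \<Longrightarrow> e \<in> set_pmf p \<Longrightarrow> Feas (S e g)"
    and lb: "\<And>g. Feas g \<Longrightarrow> m \<le> xi g"
    and gapid: "\<And>g. Feas g \<Longrightarrow> gp g = \<tau> * (xi g - measure_pmf.expectation p (\<lambda>e. xi (S e g)))"
    and tau: "\<tau> > 0"
    and Ff: "Feas f"
    and fb: "xi f \<le> (1 + \<epsilon>) * m"
  shows "measure_pmf.expectation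
           (bind_pmf (pmf_of_set {0..<nat \<lceil>\<tau>\<rceil>}) (\<lambda>k. map_pmf (\<lambda>es. fold S es f) (iid_list p k))) gp
         \<le> \<epsilon> * m"
proof -
  define N where "N = nat \<lceil>\<tau>\<rceil>"
  have N1: "N \<ge> 1" using tau unfolding N_def by linarith
  have tauN: "\<tau> \<le> real N" unfolding N_def by linarith
  define X where "X k = measure_pmf.expectation (iid_list p k) (\<lambda>es. xi (fold S es f))" for k
  have feasl: "Feas (fold S es f)" if "es \<in> set_pmf (iid_list p k)" for es k
    using iid_feas[of Feas p S f es] feasS Ff set_iid_list[OF that] by blast
  have G: "measure_pmf.expectation (iid_list p k) (\<lambda>es. gp (fold S es f)) = \<tau> * (X k - X (Suc k))" for k
  proof -
    have "measure_pmf.expectation (iid_list p k) (\<lambda>es. gp (fold S es f)) =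
       measure_pmf.expectation (iid_list p k) (\<lambda>es. \<tau> * (xi (fold S es f) - measure_pmf.expectation p (\<lambda>e. xi (S e (fold S es f)))))"
      by (rule integral_cong_AE) (auto simp: AE_measure_pmf_iff gapid feasl)
    also have "\<dots> = \<tau> * (X k - X (Suc k))"
      unfolding X_def iid_step[OF fin]
      by (simp add: integral_diff integrable_measure_pmf_finite finite_iid_list fin)
    finally show ?thesis .
  qed
  have X0: "X 0 = xi f" by (simp add: X_def)
  have XN: "X N \<ge> m"
  proof -
    have "X N \<ge> measure_pmf.expectation (iid_list p N) (\<lambda>es. m)"
      unfolding X_def
      by (rule integral_mono_AE) (auto simp: AE_measure_pmf_iff lb feasl intro: integrable_measure_pmf_finite finite_iid_list fin)
    then show ?thesis by simp
  qed
  have "measure_pmf.expectation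
           (bind_pmf (pmf_of_set {0..<N}) (\<lambda>k. map_pmf (\<lambda>es. fold S es f) (iid_list p k))) gp
        = (\<Sum>k\<in>{0..<N}. \<tau> * (X k - X (Suc k)) / real (card {0..<N}))"
    by (subst pmf_expectation_bind_pmf_of_set) (use N1 in \<open>auto simp: G finite_iid_list fin divide_inverse mult.commute\<close>)
  also have "\<dots> = \<tau> * (X 0 - X N) / real N"
    by (simp add: sum_divide_distrib[symmetric] sum_distrib_left[symmetric] atLeast0LessThan sum_lessThan_telescope')
  also have "\<dots> \<le> \<epsilon> * m"
  proof -
    have d: "xi f - X N \<le> xi f - m" using XN by simp
    have m0: "m \<le> xi f" using lb Ff by simp
    have "\<tau> * (X 0 - X N) / real N \<le> \<tau> * (xi f - m) / real N"
      using d tau N1 X0 by (intro divide_right_mono mult_left_mono) auto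
    also have "\<dots> \<le> xi f - m"
      using tauN m0 N1 by (simp add: divide_le_eq mult.commute mult_right_mono)
    finally show ?thesis using fb by (simp add: algebra_simps)
  qed
  finally show ?thesis by (simp add: N_def)
qed



lemma walk_rtrancl:
  "vs \<noteq> [] \<Longrightarrow> (\<forall>i. Suc i < length vs \<longrightarrow> (vs!i, vs!Suc i) \<in> R) \<Longrightarrow> (hd vs, last vs) \<in> R\<^sup>*"
proof (induction vs)
  case Nil then show ?case by simp
next
  case (Cons x xs)
  show ?case
  proof (cases "xs = []")
    case True then show ?thesis by simp
  next
    case False
    have "(hd xs, last xs) \<in> R\<^sup>*"
      using Cons.IH[OF False] Cons.prems(2) by (metis Suc_less_eq length_Cons nth_Cons_Suc)
    moreover have "(x, hd xs) \<in> R" using Cons.prems(2)[rule_format, of 0] False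
      by (simp add: hd_conv_nth)
    ultimately show ?thesis using False by (simp add: converse_rtrancl_into_rtrancl)
  qed
qed

lemma is_tpath_usym: "is_tpath T vs a b \<Longrightarrow> Suc i < length vs \<Longrightarrow> (vs!i, vs!Suc i) \<in> usym T"
  unfolding is_tpath_def usym_def by auto

lemma last_take_nth: "i < length vs \<Longrightarrow> last (take (Suc i) vs) = vs ! i"
  apply (subst last_conv_nth) apply (auto simp: min_def) apply (subgoal_tac "length vs - Suc 0 = i") apply simp apply linarith done

lemma tpath_take: "is_tpath T vs a b \<Longrightarrow> i < length vs \<Longrightarrow> is_tpath T (take (Suc i) vs) a (vs!i)"
  unfolding is_tpath_def by (auto simp: last_take_nth)

lemma tpath_tl: "is_tpath T (x#xs) a b \<Longrightarrow> xs \<noteq> [] \<Longrightarrow> is_tpath T xs (hd xs) b"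
  unfolding is_tpath_def by auto

lemma tpath_exists: "(a,b) \<in> (usym T)\<^sup>* \<Longrightarrow> \<exists>vs. is_tpath T vs a b"
proof (induction rule: rtrancl_induct)
  case base
  show ?case by (rule exI[of _ "[a]"]) (simp add: is_tpath_def)
next
  case (step b c)
  then obtain vs where vs: "is_tpath T vs a b" by blast
  show ?case
  proof (cases "c \<in> set vs")
    case True
    then obtain i where "i < length vs" "vs ! i = c" by (auto simp: in_set_conv_nth)
    then show ?thesis using tpath_take[OF vs] by metis
  next
    case False
    have "is_tpath T (vs @ [c]) a c"
      unfolding is_tpath_def
    proof (intro conjI allI impI)
      show "distinct (vs @ [c])" using vs False by (simp add: is_tpath_def)
      show "hd (vs @ [c]) = a" using vs by (simp add: is_tpath_def)
      fix i assume i: "Suc i < length (vs @ [c])"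
      show "((vs @ [c]) ! i, (vs @ [c]) ! Suc i) \<in> T \<or> ((vs @ [c]) ! Suc i, (vs @ [c]) ! i) \<in> T"
      proof (cases "Suc i < length vs")
        case True then show ?thesis using vs by (simp add: is_tpath_def nth_append)
      next
        case False
        then have "i = length vs - 1" "vs \<noteq> []" using i vs by (auto simp: is_tpath_def)
        then have "(vs @ [c]) ! i = b" "(vs @ [c]) ! Suc i = c" using vs
          by (auto simp: is_tpath_def nth_append last_conv_nth)
        then show ?thesis using step(2) by (auto simp: usym_def)
      qed
    qed auto
    then show ?thesis by blast
  qed
qed

lemma usym_sym: "(x,y) \<in> (usym S)\<^sup>* \<Longrightarrow> (y,x) \<in> (usym S)\<^sup>*"
proof -
  have "(usym S)\<inverse> = usym S" by (auto simp: usym_def)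
  then show "(x,y) \<in> (usym S)\<^sup>* \<Longrightarrow> (y,x) \<in> (usym S)\<^sup>*"
    by (metis rtrancl_converseI)
qed

lemma distinct_hd_last: "distinct q \<Longrightarrow> q \<noteq> [] \<Longrightarrow> hd q = last q \<Longrightarrow> length q = 1"
  by (cases q) (auto simp: last_ConsR split: if_splits)

definition bridges :: "('v \<times> 'v) set \<Rightarrow> bool" where
  "bridges T \<longleftrightarrow> (\<forall>(a, b)\<in>T. (a, b) \<notin> (usym (T - {(a, b)}))\<^sup>*)"

lemma first_step:
  assumes br: "bridges T" and p: "is_tpath T p a b" and q: "is_tpath T q a b" and lp: "length p \<ge> 2"
  shows "length q \<ge> 2 \<and> q ! 1 = p ! 1"
proof -
  have pd: "distinct p" "p \<noteq> []" "hd p = a" "last p = b" using p by (auto simp: is_tpath_def)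
  have qd: "distinct q" "q \<noteq> []" "hd q = a" "last q = b" using q by (auto simp: is_tpath_def)
  have lq: "length q \<ge> 2"
  proof (rule ccontr)
    assume "\<not> 2 \<le> length q"
    then have "length q = 1" using qd by (cases q) (auto simp: Suc_le_eq)
    then have "a = b" using qd by (cases q) auto
    then have "length p = 1" using distinct_hd_last pd by metis
    then show False using lp by simp
  qed
  have p0: "p ! 0 = a" using pd by (simp add: hd_conv_nth)
  have q0: "q ! 0 = a" using qd by (simp add: hd_conv_nth)
  define y where "y = p ! 1"
  have ay: "(a, y) \<in> usym T" using is_tpath_usym[OF p, of 0] lp p0 by (simp add: y_def)
  have "q ! 1 = y"
  proof (rule ccontr)
    assume ne: "q ! 1 \<noteq> y"
    obtain e0 where e0: "e0 \<in> T" "e0 = (a,y) \<or> e0 = (y,a)" using ay by (auto simp: usym_def)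
    let ?S = "T - {e0}"
    have qS: "(q!i, q!Suc i) \<in> usym ?S" if i: "Suc i < length q" for i
    proof -
      have st: "(q!i, q!Suc i) \<in> usym T" using is_tpath_usym[OF q i] .
      show ?thesis
      proof (rule ccontr)
        assume "(q!i, q!Suc i) \<notin> usym ?S"
        then have "(q!i, q!Suc i) = e0 \<or> (q!Suc i, q!i) = e0" using st by (auto simp: usym_def)
        then have "(q!i = a \<and> q!Suc i = y) \<or> (q!i = y \<and> q!Suc i = a)" using e0(2) by auto
        moreover have "q!Suc i \<noteq> a" using nth_eq_iff_index_eq[OF qd(1), of "Suc i" 0] i q0 qd(2) by auto
        moreover have "q!i = a \<Longrightarrow> i = 0" using nth_eq_iff_index_eq[OF qd(1), of i 0] i q0 qd(2) by auto
        ultimately show False using ne by auto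
      qed
    qed
    have ab: "(a, b) \<in> (usym ?S)\<^sup>*" using walk_rtrancl[of q "usym ?S"] qd qS by auto
    define p' where "p' = tl p"
    have p'ne: "p' \<noteq> []" using lp pd by (cases p) (auto simp: p'_def)
    have p'n: "p' ! i = p ! Suc i" for i using pd by (cases p) (auto simp: p'_def)
    have lp': "length p' = length p - 1" by (simp add: p'_def)
    have pS: "(p'!i, p'!Suc i) \<in> usym ?S" if i: "Suc i < length p'" for i
    proof -
      have st: "(p'!i, p'!Suc i) \<in> usym T" using is_tpath_usym[OF p, of "Suc i"] i lp' by (simp add: p'n)
      have na1: "p'!i \<noteq> a" "p'!Suc i \<noteq> a" 
        using nth_eq_iff_index_eq[OF pd(1), of "Suc i" 0] nth_eq_iff_index_eq[OF pd(1), of "Suc (Suc i)" 0] i lp' p0 pd(2) unfolding p'n by auto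
      show ?thesis using st na1 e0(2) by (auto simp: usym_def)
    qed
    have "hd p' = y" using p'ne by (simp add: hd_conv_nth p'n y_def)
    moreover have "last p' = b" using p'ne pd by (simp add: p'_def last_tl)
    ultimately have yb: "(y, b) \<in> (usym ?S)\<^sup>*" using walk_rtrancl[of p' "usym ?S"] p'ne pS by auto
    have "(a, y) \<in> (usym ?S)\<^sup>*" using ab usym_sym[OF yb] by (meson rtrancl_trans)
    moreover then have "(y, a) \<in> (usym ?S)\<^sup>*" using usym_sym by metis
    ultimately show False using br e0 unfolding bridges_def by auto
  qed
  then show ?thesis using lq by (simp add: y_def)
qed

lemma tpath_unique:
  assumes br: "bridges T"
  shows "is_tpath T p a b \<Longrightarrow> is_tpath T q a b \<Longrightarrow> p = q"
proof (induction p arbitrary: a q)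
  case Nil then show ?case by (simp add: is_tpath_def)
next
  case (Cons x p')
  have xa: "x = a" using Cons.prems(1) by (simp add: is_tpath_def)
  show ?case
  proof (cases "p' = []")
    case True
    then have "a = b" using Cons.prems(1) by (auto simp: is_tpath_def)
    then have "length q = 1" using Cons.prems(2) distinct_hd_last[of q] by (simp add: is_tpath_def)
    then show ?thesis using Cons.prems True xa by (cases q) (auto simp: is_tpath_def)
  next
    case False
    have "length q \<ge> 2 \<and> q ! 1 = (x#p') ! 1"
      by (rule first_step[OF br Cons.prems]) (use False in \<open>cases p', auto\<close>)
    note h = this
    obtain y q' where qq0: "q = y # q'" using h by (cases q) auto
    have qq1: "q' \<noteq> []" using h qq0 by auto
    have "hd q' = hd p'" using h qq0 qq1 False by (simp add: hd_conv_nth)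
    note qq = qq0 qq1 this
    have ya: "y = a" using Cons.prems(2) qq by (simp add: is_tpath_def)
    have "is_tpath T p' (hd p') b" using tpath_tl[OF Cons.prems(1) False] .
    moreover have "is_tpath T q' (hd p') b" using tpath_tl[of T y q' a b] Cons.prems(2) qq by simp
    ultimately have "p' = q'" using Cons.IH by blast
    then show ?thesis using qq xa ya by simp
  qed
qed

lemma tpath_correct:
  assumes "bridges T" "(a,b) \<in> (usym T)\<^sup>*"
  shows "is_tpath T (tpath T a b) a b"
proof -
  obtain vs where vs: "is_tpath T vs a b" using tpath_exists[OF assms(2)] by blast
  have "\<exists>!vs. is_tpath T vs a b" using vs tpath_unique[OF assms(1)] by blast
  then show ?thesis unfolding tpath_def by (rule theI')
qed

lemma tpath_eq:
  assumes "bridges T" "is_tpath T vs a b"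
  shows "tpath T a b = vs"
proof -
  have "\<exists>!vs. is_tpath T vs a b" using assms tpath_unique[OF assms(1)] by blast
  then show ?thesis unfolding tpath_def using assms(2) by (rule the1_equality)
qed




definition psum :: "('v \<Rightarrow> 'v \<Rightarrow> real) \<Rightarrow> 'v list \<Rightarrow> real" where
  "psum \<phi> vs = (\<Sum>i<length vs - 1. \<phi> (vs!i) (vs!Suc i))"

lemma psum_cons: "vs \<noteq> [] \<Longrightarrow> psum \<phi> (x#vs) = \<phi> x (hd vs) + psum \<phi> vs"
proof -
  assume ne: "vs \<noteq> []"
  then obtain n where n: "length vs = Suc n" by (cases vs) auto
  have "psum \<phi> (x#vs) = (\<Sum>i<Suc n. \<phi> ((x#vs)!i) ((x#vs)!Suc i))" by (simp add: psum_def n)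
  also have "\<dots> = \<phi> x (vs!0) + (\<Sum>i<n. \<phi> (vs!i) (vs!Suc i))" by (subst sum.lessThan_Suc_shift) simp
  finally show ?thesis using ne n by (simp add: psum_def hd_conv_nth)
qed

lemma psum_tele:
  assumes "vs \<noteq> []" "\<And>i. Suc i < length vs \<Longrightarrow> \<phi> (vs!i) (vs!Suc i) = v (vs!i) - v (vs!Suc i)"
  shows "psum \<phi> vs = v (hd vs) - v (last vs)"
proof -
  have "psum \<phi> vs = (\<Sum>i<length vs - 1. v (vs!i) - v (vs!Suc i))"
    unfolding psum_def by (rule sum.cong) (use assms(2) in auto)
  also have "\<dots> = v (vs!0) - v (vs!(length vs - 1))" by (rule sum_lessThan_telescope')
  finally show ?thesis using assms(1) by (simp add: hd_conv_nth last_conv_nth)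
qed

definition ind :: "'v \<times> 'v \<Rightarrow> 'v \<Rightarrow> 'v \<Rightarrow> real" where
  "ind x u w = (if x = (u,w) then 1 else if x = (w,u) then -1 else 0)"

lemma tflow_psum: "tflow T a b x = psum (ind x) (tpath T a b)"
  by (simp add: tflow_def psum_def ind_def Let_def)

definition st :: "('v \<times> 'v) set \<Rightarrow> ('v \<times> 'v \<Rightarrow> real) \<Rightarrow> ('v \<times> 'v \<Rightarrow> real) \<Rightarrow> 'v \<Rightarrow> 'v \<Rightarrow> real" where
  "st E r g u w = (if (u,w) \<in> E then r (u,w) * g (u,w) else r (w,u) * (- g (w,u)))"

lemma tvolt_psum: "tvolt E r T s g a = psum (st E r g) (tpath T a s)"
  by (simp add: tvolt_def psum_def st_def Let_def)

locale gctx =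
  fixes V :: "'v set" and E T :: "('v \<times> 'v) set" and r :: "'v \<times> 'v \<Rightarrow> real"
  assumes finV: "finite V" and EV: "E \<subseteq> V \<times> V"
    and orient: "\<forall>(a, b)\<in>E. a \<noteq> b \<and> (b, a) \<notin> E"
    and rpos: "\<forall>e\<in>E. r e > 0"
    and tree: "spanning_tree V E T"
begin

lemma TE: "T \<subseteq> E" using tree by (simp add: spanning_tree_def)
lemma br: "bridges T" using tree by (simp add: spanning_tree_def bridges_def)
lemma finE: "finite E" using EV finV by (meson finite_SigmaI finite_subset)

lemma tp: "a \<in> V \<Longrightarrow> b \<in> V \<Longrightarrow> is_tpath T (tpath T a b) a b"
  using tree by (intro tpath_correct[OF br]) (auto simp: spanning_tree_def connected_on_def)

lemma stepT: "is_tpath T vs a b \<Longrightarrow> Suc i < length vs \<Longrightarrow> (vs!i, vs!Suc i) \<in> T \<or> (vs!Suc i, vs!i) \<in> T"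
  by (simp add: is_tpath_def)

lemma stepne: "is_tpath T vs a b \<Longrightarrow> Suc i < length vs \<Longrightarrow> vs!i \<noteq> vs!Suc i"
  by (simp add: is_tpath_def nth_eq_iff_index_eq)

lemma edgeV: "(u,w) \<in> E \<Longrightarrow> u \<in> V \<and> w \<in> V" using EV by auto

lemma grad_T:
  assumes s: "s \<in> V" and uw: "(u,w) \<in> T"
  shows "tvolt E r T s g u - tvolt E r T s g w = r (u,w) * g (u,w)"
proof -
  have uwE: "(u,w) \<in> E" using uw TE by auto
  have uV: "u \<in> V" and wV: "w \<in> V" using edgeV[OF uwE] by auto
  have uw_ne: "u \<noteq> w" and wuE: "(w,u) \<notin> E" using orient uwE by auto
  define P where "P = tpath T w s"
  have P: "is_tpath T P w s" using tp[OF wV s] by (simp add: P_def)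
  have Pne: "P \<noteq> []" and hdP: "hd P = w" using P by (auto simp: is_tpath_def)
  show ?thesis
  proof (cases "u \<in> set P")
    case False
    have "is_tpath T (u#P) u s"
      unfolding is_tpath_def
    proof (intro conjI allI impI)
      show "distinct (u#P)" using P False by (simp add: is_tpath_def)
      show "last (u#P) = s" using P by (simp add: is_tpath_def)
      fix i assume i: "Suc i < length (u#P)"
      show "((u#P) ! i, (u#P) ! Suc i) \<in> T \<or> ((u#P) ! Suc i, (u#P) ! i) \<in> T"
      proof (cases i)
        case 0 then show ?thesis using uw hdP Pne by (simp add: hd_conv_nth)
      next
        case (Suc j) then show ?thesis using stepT[OF P, of j] i by simp
      qed
    qed auto
    then have "tpath T u s = u#P" using tpath_eq[OF br] by blast
    then have "tvolt E r T s g u = st E r g u w + tvolt E r T s g w"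
      using Pne hdP by (simp add: tvolt_psum psum_cons P_def[symmetric])
    then show ?thesis using uwE by (simp add: st_def)
  next
    case True
    then obtain i where i: "i < length P" "P ! i = u" by (auto simp: in_set_conv_nth)
    have "is_tpath T (take (Suc i) P) w u" using tpath_take[OF P i(1)] i(2) by simp
    moreover have "is_tpath T [w,u] w u" using uw uw_ne by (auto simp: is_tpath_def less_Suc_eq)
    ultimately have tk: "take (Suc i) P = [w,u]" using tpath_unique[OF br] by blast
    then have "length (take (Suc i) P) = 2" by simp
    then have i1: "i = 1" using i(1) by simp
    have P1: "P ! 1 = u" using i i1 by simp
    have lP: "length P \<ge> 2" using i i1 by simp
    have Ptl: "P = w # tl P" using Pne hdP by (cases P) auto
    have tlne: "tl P \<noteq> []" using lP by (cases P) auto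
    have hdtl: "hd (tl P) = u" using P1 Ptl tlne by (cases P) (auto simp: hd_conv_nth)
    have "is_tpath T (tl P) u s" using tpath_tl[of T w "tl P" w s] P Ptl tlne hdtl by simp
    then have tu: "tpath T u s = tl P" using tpath_eq[OF br] by blast
    have "tvolt E r T s g w = psum (st E r g) (w # tl P)" by (simp add: tvolt_psum P_def[symmetric] Ptl[symmetric])
    also have "\<dots> = st E r g w u + tvolt E r T s g u" using tlne hdtl tu by (simp add: psum_cons tvolt_psum)
    finally show ?thesis using wuE by (simp add: st_def)
  qed
qed

lemma grad_st:
  assumes s: "s \<in> V" and uw: "(u,w) \<in> T \<or> (w,u) \<in> T"
  shows "tvolt E r T s g u - tvolt E r T s g w = st E r g u w"
proof (cases "(u,w) \<in> T")
  case True then show ?thesis using grad_T[OF s True] TE by (auto simp: st_def)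
next
  case False
  then have wu: "(w,u) \<in> T" using uw by auto
  then have "(u,w) \<notin> E" using TE orient by auto
  then show ?thesis using grad_T[OF s wu, of g] by (simp add: st_def)
qed

lemma path_volt:
  assumes s: "s \<in> V" and a: "a \<in> V" and b: "b \<in> V"
  shows "psum (st E r g) (tpath T a b) = tvolt E r T s g a - tvolt E r T s g b"
proof -
  have P: "is_tpath T (tpath T a b) a b" using tp[OF a b] .
  have "psum (st E r g) (tpath T a b) = tvolt E r T s g (hd (tpath T a b)) - tvolt E r T s g (last (tpath T a b))"
    by (rule psum_tele) (use P grad_st[OF s] stepT[OF P] in \<open>auto simp: is_tpath_def\<close>)
  then show ?thesis using P by (simp add: is_tpath_def)
qed

lemma sum_ind:
  assumes "u \<noteq> w" "(u,w) \<in> E \<or> (w,u) \<in> E"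
  shows "(\<Sum>x\<in>E. h x * ind x u w) = (if (u,w) \<in> E then h (u,w) else - h (w,u))"
proof (cases "(u,w) \<in> E")
  case True
  then have "(w,u) \<notin> E" using orient by auto
  then have "(\<Sum>x\<in>E. h x * ind x u w) = (\<Sum>x\<in>E. if x = (u,w) then h x else 0)"
    by (intro sum.cong) (auto simp: ind_def)
  then show ?thesis using True finE by simp
next
  case False
  then have wu: "(w,u) \<in> E" using assms by auto
  have "(\<Sum>x\<in>E. h x * ind x u w) = (\<Sum>x\<in>E. if x = (w,u) then - h x else 0)"
    using False assms(1) by (intro sum.cong) (auto simp: ind_def)
  then show ?thesis using False wu finE by simp
qed

lemma sum_tflow:
  assumes a: "a \<in> V" and b: "b \<in> V"
  shows "(\<Sum>x\<in>E. h x * tflow T a b x) = psum (\<lambda>u w. if (u,w) \<in> E then h (u,w) else - h (w,u)) (tpath T a b)"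
proof -
  define P where "P = tpath T a b"
  have P: "is_tpath T P a b" using tp[OF a b] by (simp add: P_def)
  have "(\<Sum>x\<in>E. h x * tflow T a b x) = (\<Sum>x\<in>E. \<Sum>i<length P - 1. h x * ind x (P!i) (P!Suc i))"
    by (simp add: tflow_psum psum_def sum_distrib_left P_def)
  also have "\<dots> = (\<Sum>i<length P - 1. \<Sum>x\<in>E. h x * ind x (P!i) (P!Suc i))" by (rule sum.swap)
  also have "\<dots> = (\<Sum>i<length P - 1. if (P!i, P!Suc i) \<in> E then h (P!i, P!Suc i) else - h (P!Suc i, P!i))"
  proof (rule sum.cong)
    fix i assume "i \<in> {..<length P - 1}"
    then have i: "Suc i < length P" by auto
    show "(\<Sum>x\<in>E. h x * ind x (P!i) (P!Suc i)) = (if (P!i, P!Suc i) \<in> E then h (P!i, P!Suc i) else - h (P!Suc i, P!i))"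
      by (rule sum_ind) (use stepne[OF P i] stepT[OF P i] TE in auto)
  qed simp
  finally show ?thesis by (simp add: psum_def P_def[symmetric])
qed

lemma flow_div:
  assumes a: "a \<in> V" and b: "b \<in> V"
  shows "(\<Sum>x\<in>E. incid x c * tflow T a b x) = (if c = a then 1 else 0) - (if c = b then 1 else 0)"
proof -
  define P where "P = tpath T a b"
  have P: "is_tpath T P a b" using tp[OF a b] by (simp add: P_def)
  have "psum (\<lambda>u w. if (u,w) \<in> E then incid (u,w) c else - incid (w,u) c) P
      = (\<lambda>z. if c = z then 1 else 0) (hd P) - (\<lambda>z. if c = z then 1 else 0) (last P)"
  proof (rule psum_tele)
    show "P \<noteq> []" using P by (simp add: is_tpath_def)
    fix i assume i: "Suc i < length P"
    show "(if (P!i, P!Suc i) \<in> E then incid (P!i, P!Suc i) c else - incid (P!Suc i, P!i) c) =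
       (if c = P!i then 1 else 0) - (if c = P!Suc i then 1 else 0)"
      using stepne[OF P i] by (auto simp: incid_def)
  qed
  then show ?thesis using P sum_tflow[OF a b, of "\<lambda>x. incid x c"] by (simp add: P_def is_tpath_def)
qed

lemma volt_flow:
  assumes s: "s \<in> V" and a: "a \<in> V" and b: "b \<in> V"
  shows "(\<Sum>x\<in>E. g x * r x * tflow T a b x) = tvolt E r T s g a - tvolt E r T s g b"
proof -
  have "(\<lambda>u w. if (u,w) \<in> E then g (u,w) * r (u,w) else - (g (w,u) * r (w,u))) = st E r g"
    by (auto simp: st_def fun_eq_iff)
  then show ?thesis using sum_tflow[OF a b, of "\<lambda>x. g x * r x"] path_volt[OF s a b, of g] by simp
qed

lemma tflow_off:
  assumes e: "e \<in> E - T" and a: "a \<in> V" and b: "b \<in> V"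
  shows "tflow T a b e = 0"
proof -
  define P where "P = tpath T a b"
  have P: "is_tpath T P a b" using tp[OF a b] by (simp add: P_def)
  have "tflow T a b e = (\<Sum>i<length P - 1. ind e (P!i) (P!Suc i))" by (simp add: tflow_psum psum_def P_def)
  also have "\<dots> = 0"
  proof (rule sum.neutral, rule ballI)
    fix i assume "i \<in> {..<length P - 1}"
    then have i: "Suc i < length P" by auto
    have "e \<noteq> (P!i, P!Suc i)" "e \<noteq> (P!Suc i, P!i)" using stepT[OF P i] e TE orient by auto
    then show "ind e (P!i) (P!Suc i) = 0" by (simp add: ind_def)
  qed
  finally show ?thesis .
qed

end



context gctx
begin

lemma offV: "e \<in> E \<Longrightarrow> fst e \<in> V \<and> snd e \<in> V \<and> fst e \<noteq> snd e"
  using EV orient by (cases e) auto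

lemma cvec_self: "e \<in> E - T \<Longrightarrow> cvec T e e = 1"
  using tflow_off[of e "fst e" "snd e"] offV[of e] by (simp add: cvec_def)

lemma crc_nonneg: "x \<in> E \<Longrightarrow> 0 \<le> c * r x * c"
proof -
  assume "x \<in> E"
  then have "0 \<le> r x" using rpos by (auto intro: less_imp_le)
  moreover have "c * r x * c = r x * (c * c)" by (simp add: mult_ac)
  ultimately show ?thesis by (metis mult_nonneg_nonneg zero_le_square)
qed

lemma R_ge: assumes e: "e \<in> E - T" shows "r e \<le> Rres E r T e"
proof -
  have "cvec T e e * r e * cvec T e e \<le> Rres E r T e"
    unfolding Rres_def
    by (rule member_le_sum) (use e finE crc_nonneg in auto)
  then show ?thesis using cvec_self[OF e] by simp
qed

lemma R_pos: "e \<in> E - T \<Longrightarrow> Rres E r T e > 0"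
  using R_ge[of e] rpos by force

lemma R_nonneg: "0 \<le> Rres E r T e"
  unfolding Rres_def using crc_nonneg by (intro sum_nonneg) auto

lemma Delta_eq:
  assumes e: "e \<in> E - T" and s: "s \<in> V"
  shows "Delta E r T e g = g e * r e - (tvolt E r T s g (fst e) - tvolt E r T s g (snd e))"
proof -
  have ab: "fst e \<in> V" "snd e \<in> V" using offV[of e] e by auto
  have "Delta E r T e g = (\<Sum>x\<in>E. (if x = e then g x * r x else 0)) - (\<Sum>x\<in>E. g x * r x * tflow T (fst e) (snd e) x)"
    unfolding Delta_def cvec_def by (subst sum_subtractf[symmetric], rule sum.cong) (auto simp: right_diff_distrib)
  also have "\<dots> = g e * r e - (tvolt E r T s g (fst e) - tvolt E r T s g (snd e))"
    using volt_flow[OF s ab] e finE by simp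
  finally show ?thesis .
qed

lemma feas_step:
  assumes e: "e \<in> E - T" and g: "feasible V E chi g"
  shows "feasible V E chi (cstep E r T g e)"
  unfolding feasible_def
proof
  fix c assume c: "c \<in> V"
  have ab: "fst e \<in> V" "snd e \<in> V" "fst e \<noteq> snd e" using offV[of e] e by auto
  define \<alpha> where "\<alpha> = Delta E r T e g / Rres E r T e"
  have z: "(\<Sum>x\<in>E. incid x c * cvec T e x) = 0"
  proof -
    have "(\<Sum>x\<in>E. incid x c * cvec T e x) = (\<Sum>x\<in>E. (if x = e then incid x c else 0)) - (\<Sum>x\<in>E. incid x c * tflow T (fst e) (snd e) x)"
      unfolding cvec_def by (subst sum_subtractf[symmetric], rule sum.cong) (auto simp: right_diff_distrib)
    also have "\<dots> = 0" using flow_div[OF ab(1,2), of c] e finE ab(3) by (auto simp: incid_def)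
    finally show ?thesis .
  qed
  have "(\<Sum>x\<in>E. incid x c * cstep E r T g e x) = (\<Sum>x\<in>E. incid x c * g x) - \<alpha> * (\<Sum>x\<in>E. incid x c * cvec T e x)"
    unfolding cstep_def \<alpha>_def[symmetric] by (simp add: right_diff_distrib sum_subtractf sum_distrib_left mult.left_commute)
  also have "\<dots> = chi c" using z g c by (simp add: feasible_def)
  finally show "(\<Sum>x\<in>E. incid x c * cstep E r T g e x) = chi c" .
qed

lemma energy_step:
  assumes e: "e \<in> E - T"
  shows "energy E r (cstep E r T g e) = energy E r g - (Delta E r T e g)\<^sup>2 / Rres E r T e"
proof -
  define \<alpha> where "\<alpha> = Delta E r T e g / Rres E r T e"
  define R where "R = Rres E r T e"
  define D where "D = Delta E r T e g"
  have R: "R > 0" using R_pos[OF e] by (simp add: R_def)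
  have "energy E r (cstep E r T g e) = (\<Sum>x\<in>E. g x * r x * g x - 2 * \<alpha> * (g x * r x * cvec T e x) + \<alpha>^2 * (cvec T e x * r x * cvec T e x))"
    unfolding energy_def cstep_def \<alpha>_def[symmetric] by (rule sum.cong) (auto simp: algebra_simps power2_eq_square)
  also have "\<dots> = energy E r g - 2 * \<alpha> * D + \<alpha>^2 * R"
    by (simp add: sum.distrib sum_subtractf sum_distrib_left energy_def D_def R_def Delta_def Rres_def)
  also have "\<dots> = energy E r g - D^2 / R"
    using R by (simp add: \<alpha>_def D_def[symmetric] R_def[symmetric] field_simps power2_eq_square)
  finally show ?thesis by (simp add: D_def R_def)
qed

lemma gap_eq:
  assumes g: "feasible V E chi g" and s: "s \<in> V"
  shows "gap V E r chi g (tvolt E r T s g) = (\<Sum>e\<in>E - T. (Delta E r T e g)\<^sup>2 / r e)"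
proof -
  define v where "v = tvolt E r T s g"
  define \<delta> where "\<delta> e = v (fst e) - v (snd e)" for e
  have d1: "(\<Sum>a\<in>V. incid e a * v a) = \<delta> e" if e: "e \<in> E" for e
  proof -
    have ab: "fst e \<in> V" "snd e \<in> V" "fst e \<noteq> snd e" using offV[OF e] by auto
    have "(\<Sum>a\<in>V. incid e a * v a) = (\<Sum>a\<in>V. (if a = fst e then v a else 0)) - (\<Sum>a\<in>V. (if a = snd e then v a else 0))"
      unfolding sum_subtractf[symmetric] by (rule sum.cong) (use ab in \<open>auto simp: incid_def\<close>)
    then show ?thesis using ab finV by (simp add: \<delta>_def)
  qed
  have chi: "(\<Sum>a\<in>V. v a * chi a) = (\<Sum>e\<in>E. g e * \<delta> e)"
  proof -
    have "(\<Sum>a\<in>V. v a * chi a) = (\<Sum>a\<in>V. \<Sum>e\<in>E. g e * (incid e a * v a))"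
    proof (rule sum.cong)
      fix a assume a: "a \<in> V"
      have "chi a = (\<Sum>e\<in>E. incid e a * g e)" using g a by (simp add: feasible_def)
      then show "v a * chi a = (\<Sum>e\<in>E. g e * (incid e a * v a))" by (simp add: sum_distrib_left mult_ac)
    qed simp
    also have "\<dots> = (\<Sum>e\<in>E. \<Sum>a\<in>V. g e * (incid e a * v a))" by (rule sum.swap)
    also have "\<dots> = (\<Sum>e\<in>E. g e * \<delta> e)" by (rule sum.cong) (auto simp: sum_distrib_left[symmetric] d1)
    finally show ?thesis .
  qed
  have lapq: "(\<Sum>a\<in>V. \<Sum>b\<in>V. v a * lap E r a b * v b) = (\<Sum>e\<in>E. (\<delta> e)\<^sup>2 / r e)"
  proof -
    have "(\<Sum>a\<in>V. \<Sum>b\<in>V. v a * lap E r a b * v b) = (\<Sum>a\<in>V. \<Sum>b\<in>V. \<Sum>e\<in>E. (1 / r e) * ((incid e a * v a) * (incid e b * v b)))"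
      unfolding lap_def by (auto simp: sum_distrib_left sum_distrib_right mult_ac intro!: sum.cong)
    also have "\<dots> = (\<Sum>a\<in>V. \<Sum>e\<in>E. \<Sum>b\<in>V. (1 / r e) * ((incid e a * v a) * (incid e b * v b)))"
      by (rule sum.cong) (auto intro: sum.swap)
    also have "\<dots> = (\<Sum>e\<in>E. \<Sum>a\<in>V. \<Sum>b\<in>V. (1 / r e) * ((incid e a * v a) * (incid e b * v b)))"
      by (rule sum.swap)
    also have "\<dots> = (\<Sum>e\<in>E. (1 / r e) * ((\<Sum>a\<in>V. incid e a * v a) * (\<Sum>b\<in>V. incid e b * v b)))"
      apply (simp only: sum_distrib_left sum_distrib_right) apply (rule sum.cong[OF refl]) apply (rule sum.swap) done
    also have "\<dots> = (\<Sum>e\<in>E. (\<delta> e)\<^sup>2 / r e)"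
      by (rule sum.cong) (auto simp: d1 power2_eq_square)
    finally show ?thesis .
  qed
  have "gap V E r chi g v = (\<Sum>e\<in>E. (g e * r e - \<delta> e)\<^sup>2 / r e)"
  proof -
    have "gap V E r chi g v = (\<Sum>e\<in>E. g e * r e * g e) - 2 * (\<Sum>e\<in>E. g e * \<delta> e) + (\<Sum>e\<in>E. (\<delta> e)\<^sup>2 / r e)"
      by (simp add: gap_def dual_energy_def energy_def chi lapq)
    also have "\<dots> = (\<Sum>e\<in>E. g e * r e * g e - 2 * (g e * \<delta> e) + (\<delta> e)\<^sup>2 / r e)"
      by (simp add: sum.distrib sum_subtractf sum_distrib_left)
    also have "\<dots> = (\<Sum>e\<in>E. (g e * r e - \<delta> e)\<^sup>2 / r e)"
    proof (rule sum.cong)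
      fix e assume "e \<in> E"
      then have "r e > 0" using rpos by auto
      then show "g e * r e * g e - 2 * (g e * \<delta> e) + (\<delta> e)\<^sup>2 / r e = (g e * r e - \<delta> e)\<^sup>2 / r e"
        by (simp add: field_simps power2_eq_square)
    qed simp
    finally show ?thesis .
  qed
  also have "\<dots> = (\<Sum>e\<in>E - T. (g e * r e - \<delta> e)\<^sup>2 / r e) + (\<Sum>e\<in>T. (g e * r e - \<delta> e)\<^sup>2 / r e)"
    by (rule sum.subset_diff[OF TE finE])
  also have "(\<Sum>e\<in>T. (g e * r e - \<delta> e)\<^sup>2 / r e) = 0"
  proof (rule sum.neutral, rule ballI)
    fix e assume eT: "e \<in> T"
    obtain u w where uw: "e = (u,w)" by (cases e)
    have "\<delta> e = r e * g e" using grad_T[OF s, of u w g] eT uw by (simp add: \<delta>_def v_def)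
    then show "(g e * r e - \<delta> e)\<^sup>2 / r e = 0" by simp
  qed
  also have "(\<Sum>e\<in>E - T. (g e * r e - \<delta> e)\<^sup>2 / r e) = (\<Sum>e\<in>E - T. (Delta E r T e g)\<^sup>2 / r e)"
    by (rule sum.cong) (auto simp: Delta_eq[OF _ s] \<delta>_def v_def)
  finally show ?thesis by (simp add: v_def)
qed

end



context gctx
begin

definition pf where "pf e = (if e \<in> E - T then Rres E r T e / (r e * tcond E r T) else 0)"

lemma tau_pos: "E - T \<noteq> {} \<Longrightarrow> tcond E r T > 0"
  unfolding tcond_def
  by (rule sum_pos) (use finE R_pos rpos in auto)

lemma pf_nonneg: "E - T \<noteq> {} \<Longrightarrow> 0 \<le> pf e"
  using tau_pos R_nonneg[of e] rpos by (auto simp: pf_def intro!: divide_nonneg_pos)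

lemma pf_sum: "E - T \<noteq> {} \<Longrightarrow> (\<Sum>e\<in>E - T. pf e) = 1"
proof -
  assume ne: "E - T \<noteq> {}"
  have "(\<Sum>e\<in>E - T. pf e) = (\<Sum>e\<in>E - T. Rres E r T e / r e) / tcond E r T"
    by (simp add: pf_def sum_divide_distrib)
  then show ?thesis using tau_pos[OF ne] by (simp add: tcond_def)
qed

lemma pmf_pdist:
  assumes ne: "E - T \<noteq> {}"
  shows "pmf (pdist E r T) e = pf e" "set_pmf (pdist E r T) \<subseteq> E - T"
proof -
  have nn: "\<And>x. 0 \<le> pf x" using pf_nonneg[OF ne] .
  have "(\<integral>\<^sup>+x. ennreal (pf x) \<partial>count_space UNIV) = (\<integral>\<^sup>+x. ennreal (pf x) \<partial>count_space (E - T))"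
    by (rule nn_integral_count_space_eq) (auto simp: pf_def)
  also have "\<dots> = (\<Sum>x\<in>E - T. ennreal (pf x))" using finE by (simp add: nn_integral_count_space_finite)
  also have "\<dots> = 1" using nn pf_sum[OF ne] by simp
  finally have prob: "(\<integral>\<^sup>+x. ennreal (pf x) \<partial>count_space UNIV) = 1" .
  have pd: "pdist E r T = embed_pmf pf" by (simp add: pdist_def pf_def[abs_def])
  show "pmf (pdist E r T) e = pf e" unfolding pd by (rule pmf_embed_pmf[OF nn prob])
  show "set_pmf (pdist E r T) \<subseteq> E - T" unfolding pd set_embed_pmf[OF nn prob] by (auto simp: pf_def)
qed

lemma exp_pdist:
  assumes ne: "E - T \<noteq> {}"
  shows "measure_pmf.expectation (pdist E r T) h = (\<Sum>e\<in>E - T. h e * pf e)"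
  using pmf_pdist[OF ne] finE by (subst integral_measure_pmf_real[of "E - T"]) auto

lemma gapid:
  assumes ne: "E - T \<noteq> {}" and g: "feasible V E chi g" and s: "s \<in> V"
  shows "gap V E r chi g (tvolt E r T s g) =
     tcond E r T * (energy E r g - measure_pmf.expectation (pdist E r T) (\<lambda>e. energy E r (cstep E r T g e)))"
proof -
  define \<tau> where "\<tau> = tcond E r T"
  have tp: "\<tau> > 0" using tau_pos[OF ne] by (simp add: \<tau>_def)
  have "measure_pmf.expectation (pdist E r T) (\<lambda>e. energy E r (cstep E r T g e))
     = (\<Sum>e\<in>E - T. energy E r g * pf e - (Delta E r T e g)\<^sup>2 / r e / \<tau>)"
    unfolding exp_pdist[OF ne]
  proof (rule sum.cong)
    fix e assume e: "e \<in> E - T"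
    have R: "Rres E r T e > 0" "r e > 0" using R_pos[OF e] rpos e by auto
    show "energy E r (cstep E r T g e) * pf e = energy E r g * pf e - (Delta E r T e g)\<^sup>2 / r e / \<tau>"
      unfolding energy_step[OF e] using R tp e by (simp add: pf_def \<tau>_def field_simps)
  qed simp
  also have "\<dots> = energy E r g - (\<Sum>e\<in>E - T. (Delta E r T e g)\<^sup>2 / r e) / \<tau>"
    by (simp add: sum_subtractf sum_distrib_left[symmetric] pf_sum[OF ne] sum_divide_distrib)
  finally show ?thesis using tp gap_eq[OF g s] by (simp add: \<tau>_def[symmetric])
qed

end

theorem lemma7p3:
  fixes V :: "'v set" and E T :: "('v \<times> 'v) set" and r :: "'v \<times> 'v \<Rightarrow> real"
    and chi :: "'v \<Rightarrow> real" and f fstar :: "'v \<times> 'v \<Rightarrow> real" and s :: 'v and \<epsilon> :: real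
  assumes "finite V" and "E \<subseteq> V \<times> V"
    and "\<forall>(a, b)\<in>E. a \<noteq> b \<and> (b, a) \<notin> E"
    and "\<forall>e\<in>E. r e > 0"
    and "connected_on V E"
    and "(\<Sum>a\<in>V. chi a) = 0"
    and "spanning_tree V E T"
    and "s \<in> V"
    and "E - T \<noteq> {}"
    and "\<epsilon> \<ge> 0"
    and "feasible V E chi fstar"
    and "\<forall>g. feasible V E chi g \<longrightarrow> energy E r fstar \<le> energy E r g"
    and "feasible V E chi f"
    and "energy E r f \<le> (1 + \<epsilon>) * energy E r fstar"
  shows "measure_pmf.expectation
           (bind_pmf (pmf_of_set {0..<nat \<lceil>tcond E r T\<rceil>}) (\<lambda>k.
              map_pmf (\<lambda>es. fold (\<lambda>e g. cstep E r T g e) es f) (iid_list (pdist E r T) k)))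
           (\<lambda>g. gap V E r chi g (tvolt E r T s g))
         \<le> \<epsilon> * energy E r fstar"
proof -
  interpret gctx V E T r using assms(1-4,7) by unfold_locales
  show ?thesis
  proof (rule abstract_main[where Feas = "feasible V E chi"])
    show "finite (set_pmf (pdist E r T))" using pmf_pdist(2)[OF assms(9)] finE by (meson finite_Diff finite_subset)
    show "\<And>g e. feasible V E chi g \<Longrightarrow> e \<in> set_pmf (pdist E r T) \<Longrightarrow> feasible V E chi (cstep E r T g e)"
      using feas_step pmf_pdist(2)[OF assms(9)] by blast
    show "\<And>g. feasible V E chi g \<Longrightarrow> energy E r fstar \<le> energy E r g" using assms(12) by blast
    show "\<And>g. feasible V E chi g \<Longrightarrow> gap V E r chi g (tvolt E r T s g) =
        tcond E r T * (energy E r g - measure_pmf.expectation (pdist E r T) (\<lambda>e. energy E r (cstep E r T g e)))"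
      using gapid[OF assms(9) _ assms(8)] by blast
    show "tcond E r T > 0" using tau_pos[OF assms(9)] .
  qed (use assms(13,14) in auto)
qed


end
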